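(* Let $a\in\mathbb{R}$ and let $f$ be a real function analytic on an open interval containing $a$. For $b>a$ (with $b$ in that interval), fix an antiderivative $f^{(-1)}$ of $f$ and define the characteristic numbers $c_n^f=\int_a^b f^{(n)}(x)\,dx=f^{(n-1)}(b)-f^{(n-1)}(a)$ for $n\ge 0$, and for $N\in\mathbb{N}_0$ define \[ \mathcal{A}^{f,B}_{(a,b),N}(x)=\sum_{n=0}^{N} c_n^f\,(b-a)^{n-1}\,\frac{1}{n!}\,B_n\!\left(\frac{x-a}{b-a}\right), \] where $B_n$ is the $n$-th Bernoulli polynomial. Then for every fixed $N$ and every real $x$, \[ \lim_{b\to a}\mathcal{A}^{f,B}_{(a,b),N}(x)=\sum_{k=0}^{N}\frac{f^{(k)}(a)}{k!}(x-a)^k . \]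
   Context: Bernoulli polynomials: $B_n(x)=\sum_{k=0}^{n}\binom{n}{k}B_{n-k}x^k$ where $B_j$ are the Bernoulli numbers; they satisfy $B_0=1$, $B_n'=nB_{n-1}$, $\int_0^1B_n=0$ for $n\ge1$. The term $n=0$ uses $c_0^f=\int_a^b f(x)\,dx$. *)

theory Defs
  imports "HOL-Analysis.Analysis"
begin

text \<open>Bernoulli numbers with the convention B_1 = -1/2, via the standard recurrence
  sum_{k<n+1} (n+1 choose k) B_k = 0 for n >= 1, B_0 = 1.\<close>
function bernoulli_num :: "nat \<Rightarrow> real" where
  "bernoulli_num n =
     (if n = 0 then 1
      else - (\<Sum>k<n. real (Suc n choose k) * bernoulli_num k) / real (Suc n))"
  by auto
termination by (relation "Wellfounded.measure id") auto

definition bernoulli_poly :: "nat \<Rightarrow> real \<Rightarrow> real" where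
  "bernoulli_poly n x = (\<Sum>k\<le>n. real (n choose k) * bernoulli_num (n - k) * x ^ k)"

definition real_analytic_on :: "(real \<Rightarrow> real) \<Rightarrow> real set \<Rightarrow> bool" where
  "real_analytic_on f S \<longleftrightarrow>
     (\<forall>y\<in>S. \<exists>r>0. \<exists>c::nat \<Rightarrow> real. \<forall>x. \<bar>x - y\<bar> < r \<longrightarrow> (\<lambda>n. c n * (x - y) ^ n) sums f x)"

definition char_num :: "(real \<Rightarrow> real) \<Rightarrow> real \<Rightarrow> real \<Rightarrow> nat \<Rightarrow> real" where
  "char_num f a b n = integral {a..b} ((deriv ^^ n) f)"

definition bernoulli_approx ::
  "(real \<Rightarrow> real) \<Rightarrow> real \<Rightarrow> real \<Rightarrow> nat \<Rightarrow> real \<Rightarrow> real" where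
  "bernoulli_approx f a b N x =
     (\<Sum>n\<le>N. char_num f a b n * (b - a) powi (int n - 1) / fact n
              * bernoulli_poly n ((x - a) / (b - a)))"

lemma "bernoulli_num 1 = -1/2" "bernoulli_num 2 = 1/6"
  by (simp_all add: numeral_2_eq_2)

end

theory Submission
  imports Defs
begin

lemma summ_diffs:
  fixes c :: "nat \<Rightarrow> real"
  assumes "\<forall>z. \<bar>z\<bar> < r \<longrightarrow> summable (\<lambda>m. c m * z ^ m)"
  shows "\<forall>z. \<bar>z\<bar> < r \<longrightarrow> summable (\<lambda>m. diffs c m * z ^ m)"
  using assms termdiff_converges[of _ r c] by auto

lemma summ_diffs_n:
  fixes c :: "nat \<Rightarrow> real"
  assumes "\<forall>z. \<bar>z\<bar> < r \<longrightarrow> summable (\<lambda>m. c m * z ^ m)"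
  shows "\<forall>z. \<bar>z\<bar> < r \<longrightarrow> summable (\<lambda>m. (diffs ^^ n) c m * z ^ m)"
  by (induction n) (use assms summ_diffs in auto)

lemma deriv_series:
  fixes c :: "nat \<Rightarrow> real"
  assumes S: "\<forall>z. \<bar>z\<bar> < r \<longrightarrow> summable (\<lambda>m. c m * z ^ m)" and x: "\<bar>x - a\<bar> < r"
  shows "((\<lambda>y. \<Sum>m. c m * (y - a) ^ m) has_real_derivative (\<Sum>m. diffs c m * (x - a) ^ m)) (at x)"
proof -
  define K where "K = (\<bar>x - a\<bar> + r) / 2"
  have "summable (\<lambda>m. c m * K ^ m)" using S x by (auto simp: K_def)
  moreover have "norm (x - a) < norm K" using x by (auto simp: K_def)
  ultimately have "DERIV (\<lambda>z. \<Sum>n. c n * z^n) (x + (-a)) :> (\<Sum>n. diffs c n * (x-a)^n)"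
    using termdiffs_strong[of c K "x - a"] by simp
  then show ?thesis using DERIV_shift[of "\<lambda>z. \<Sum>n. c n * z^n" _ x "-a"] by simp
qed

lemma deriv_n_series:
  fixes c :: "nat \<Rightarrow> real"
  assumes S: "\<forall>z. \<bar>z\<bar> < r \<longrightarrow> summable (\<lambda>m. c m * z ^ m)"
    and F: "\<forall>x. \<bar>x - a\<bar> < r \<longrightarrow> (\<lambda>m. c m * (x - a) ^ m) sums f x"
  shows "\<forall>x. \<bar>x - a\<bar> < r \<longrightarrow> (deriv ^^ n) f x = (\<Sum>m. (diffs ^^ n) c m * (x - a) ^ m)"
proof (induction n)
  case 0
  then show ?case using F sums_unique by fastforce
next
  case (Suc n)
  show ?case
  proof (intro allI impI)
    fix x assume x: "\<bar>x - a\<bar> < r"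
    have "((\<lambda>y. \<Sum>m. (diffs ^^ n) c m * (y - a) ^ m) has_real_derivative
        (\<Sum>m. diffs ((diffs ^^ n) c) m * (x - a) ^ m)) (at x)"
      using deriv_series[OF summ_diffs_n[OF S] x] by blast
    then have "((deriv ^^ n) f has_real_derivative
        (\<Sum>m. diffs ((diffs ^^ n) c) m * (x - a) ^ m)) (at x)"
      apply (rule has_field_derivative_transform_within_open[where S="{a-r<..<a+r}"])
      using x Suc by (auto simp: abs_less_iff)
    then show "(deriv ^^ Suc n) f x = (\<Sum>m. (diffs ^^ Suc n) c m * (x - a) ^ m)"
      by (simp add: DERIV_imp_deriv)
  qed
qed

lemma cont_series:
  fixes c :: "nat \<Rightarrow> real"
  assumes S: "\<forall>z. \<bar>z\<bar> < r \<longrightarrow> summable (\<lambda>m. c m * z ^ m)"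
  shows "continuous_on {a-r<..<a+r} (\<lambda>y. \<Sum>m. c m * (y - a) ^ m)"
proof (rule continuous_at_imp_continuous_on, intro ballI)
  fix x assume "x \<in> {a-r<..<a+r}"
  then have "\<bar>x - a\<bar> < r" by (auto simp: abs_less_iff)
  from deriv_series[OF S this] show "isCont (\<lambda>y. \<Sum>m. c m * (y - a) ^ m) x"
    by (rule DERIV_isCont)
qed

lemma avg_limit:
  fixes g :: "real \<Rightarrow> real"
  assumes "continuous_on {a..a+d} g" "d > 0"
  shows "((\<lambda>b. integral {a..b} g / (b - a)) \<longlongrightarrow> g a) (at_right a)"
proof -
  have "((\<lambda>x. integral {a..x} g) has_real_derivative g a) (at a within {a..a+d})"
    using integral_has_real_derivative[OF assms(1)] assms(2) by auto
  then have "((\<lambda>y. (integral {a..y} g - integral {a..a} g) / (y - a)) \<longlongrightarrow> g a) (at a within {a..a+d})"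
    by (simp add: has_field_derivative_iff)
  then show ?thesis using at_within_Icc_at_right[of a "a+d"] assms(2) by simp
qed


lemma term_rewrite:
  fixes h :: real
  assumes h: "h > 0"
  shows "C * h powi (int n - 1) / fact n * bernoulli_poly n (y / h)
    = C / h * (\<Sum>k\<le>n. real (n choose k) * bernoulli_num (n - k) * y ^ k * h ^ (n - k)) / fact n"
proof -
  have p: "h powi (int n - 1) = h ^ n / h"
    using h by (simp add: power_int_diff)
  have "h ^ n * bernoulli_poly n (y / h)
      = (\<Sum>k\<le>n. real (n choose k) * bernoulli_num (n - k) * y ^ k * h ^ (n - k))"
    unfolding bernoulli_poly_def sum_distrib_left
  proof (rule sum.cong[OF refl])
    fix k assume "k \<in> {..n}"
    then have "h ^ n = h ^ k * h ^ (n - k)" by (simp flip: power_add)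
    then show "h ^ n * (real (n choose k) * bernoulli_num (n - k) * (y / h) ^ k)
      = real (n choose k) * bernoulli_num (n - k) * y ^ k * h ^ (n - k)"
      using h by (simp add: power_divide field_simps)
  qed
  then show ?thesis unfolding p by (simp add: field_simps)
qed

lemma sum_zero_pow:
  "(\<Sum>k\<le>n. real (n choose k) * bernoulli_num (n - k) * y ^ k * (0::real) ^ (n - k)) = y ^ n"
proof -
  have "(\<Sum>k\<le>n. real (n choose k) * bernoulli_num (n - k) * y ^ k * (0::real) ^ (n - k))
     = (\<Sum>k\<le>n. if k = n then y ^ n else 0)"
    by (rule sum.cong) auto
  also have "\<dots> = y ^ n" by simp
  finally show ?thesis .
qed

theorem proposition2:
  fixes f :: "real \<Rightarrow> real" and I :: "real set" and a x :: real and N :: nat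
  assumes "open I" and "is_interval I" and "a \<in> I"
    and "real_analytic_on f I"
  shows "((\<lambda>b. bernoulli_approx f a b N x) \<longlongrightarrow>
           (\<Sum>k\<le>N. (deriv ^^ k) f a / fact k * (x - a) ^ k)) (at_right a)"
proof -
  obtain r and c :: "nat \<Rightarrow> real" where r: "r > 0"
    and F: "\<forall>y. \<bar>y - a\<bar> < r \<longrightarrow> (\<lambda>n. c n * (y - a) ^ n) sums f y"
    using assms(3,4) unfolding real_analytic_on_def by blast
  have S: "\<forall>z. \<bar>z\<bar> < r \<longrightarrow> summable (\<lambda>m. c m * z ^ m)"
  proof (intro allI impI)
    fix z :: real assume "\<bar>z\<bar> < r"
    then have "(\<lambda>n. c n * ((a + z) - a) ^ n) sums f (a + z)" using F[rule_format, of "a + z"] by simp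
    then show "summable (\<lambda>m. c m * z ^ m)" by (auto simp: sums_iff)
  qed
  define G where "G n y = (\<Sum>m. (diffs ^^ n) c m * (y - a) ^ m)" for n y
  have D: "\<And>n y. \<bar>y - a\<bar> < r \<Longrightarrow> (deriv ^^ n) f y = G n y"
    using deriv_n_series[OF S F] unfolding G_def by blast
  have Ga: "G n a = (deriv ^^ n) f a" for n using D[of a n] r by simp
  have ev: "eventually (\<lambda>b. a < b \<and> b < a + r / 2) (at_right a)"
    using r unfolding eventually_at_right_field by (intro exI[of _ "a + r/2"]) auto
  have lim1: "((\<lambda>b. char_num f a b n / (b - a)) \<longlongrightarrow> G n a) (at_right a)" for n
  proof -
    have "continuous_on {a-r<..<a+r} (G n)"
      using cont_series[OF summ_diffs_n[OF S, of n]] unfolding G_def by simp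
    then have "continuous_on {a..a+r/2} (G n)"
      by (rule continuous_on_subset) (use r in auto)
    then have L: "((\<lambda>b. integral {a..b} (G n) / (b - a)) \<longlongrightarrow> G n a) (at_right a)"
      using avg_limit r by simp
    show ?thesis
    proof (rule Lim_transform_eventually[OF L])
      show "\<forall>\<^sub>F b in at_right a. integral {a..b} (G n) / (b - a) = char_num f a b n / (b - a)"
      proof (rule eventually_mono[OF ev])
        fix b assume b: "a < b \<and> b < a + r / 2"
        have "integral {a..b} ((deriv ^^ n) f) = integral {a..b} (G n)"
          by (rule integral_cong) (use b D in auto)
        then show "integral {a..b} (G n) / (b - a) = char_num f a b n / (b - a)"
          by (simp add: char_num_def)
      qed
    qed
  qed
  define Q where "Q n b = (\<Sum>k\<le>n. real (n choose k) * bernoulli_num (n - k) * (x - a) ^ k * (b - a) ^ (n - k))" for n b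
  have lim2: "((\<lambda>b. Q n b) \<longlongrightarrow> (x - a) ^ n) (at_right a)" for n
  proof -
    have "((\<lambda>b. Q n b) \<longlongrightarrow> Q n a) (at_right a)"
      unfolding Q_def by (intro tendsto_intros)
    then show ?thesis using sum_zero_pow[of n "x - a"] by (simp add: Q_def)
  qed
  have "((\<lambda>b. \<Sum>n\<le>N. char_num f a b n / (b - a) * Q n b / fact n) \<longlongrightarrow>
           (\<Sum>n\<le>N. G n a * (x - a) ^ n / fact n)) (at_right a)"
    by (intro tendsto_intros lim1 lim2) auto
  then have "((\<lambda>b. \<Sum>n\<le>N. char_num f a b n / (b - a) * Q n b / fact n) \<longlongrightarrow>
           (\<Sum>k\<le>N. (deriv ^^ k) f a / fact k * (x - a) ^ k)) (at_right a)"
    by (simp add: Ga)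
  then show ?thesis
  proof (rule Lim_transform_eventually)
    show "\<forall>\<^sub>F b in at_right a. (\<Sum>n\<le>N. char_num f a b n / (b - a) * Q n b / fact n) = bernoulli_approx f a b N x"
    proof (rule eventually_mono[OF ev])
      fix b assume b: "a < b \<and> b < a + r / 2"
      show "(\<Sum>n\<le>N. char_num f a b n / (b - a) * Q n b / fact n) = bernoulli_approx f a b N x"
        unfolding bernoulli_approx_def Q_def
        by (rule sum.cong[OF refl]) (use b term_rewrite[of "b - a"] in simp)
    qed
  qed
qed

end
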